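(* Let $\mathcal{Z}$ be a data space with unknown distribution $\mu$, let $S=(Z_1,\dots,Z_n)$ have i.i.d. entries $Z_i\sim\mu$, let the learning algorithm be a Markov kernel $P_{W|S}$ producing a hypothesis $W$ in a hypothesis class $\mathcal{W}$, with $P_W$ the marginal of $W$ and $P_{W,Z_i}$ the joint law of $(W,Z_i)$. Let $l:\mathcal{W}\times\mathcal{Z}\to\mathbb{R}^+$ be a loss function. For each $i=1,\dots,n$ let $\widehat{P}_{W,Z_i}$ be a joint distribution on $\mathcal{W}\times\mathcal{Z}$ such that, when $(W,Z_i)\sim\widehat{P}_{W,Z_i}$, the random variable $l(W,Z_i)$ is $\sigma$-subgaussian. Let $A_i=KL(P_W\otimes\mu\,\|\,\widehat{P}_{W,Z_i})$ and $B_i=KL(P_{W,Z_i}\,\|\,\widehat{P}_{W,Z_i})$. Then $$|\overline{\text{gen}}(P_{W|S},\mu)|\le\frac2n\sum_{i=1}^n\sqrt{\sigma^2(A_i+B_i)}.$$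
   Context: A random variable $X$ is $\sigma$-subgaussian if $\mathbb{E}[e^{\lambda(X-\mathbb{E}X)}]\le e^{\lambda^2\sigma^2/2}$ for all $\lambda\in\mathbb{R}$. Expected generalization error: $\overline{\text{gen}}(P_{W|S},\mu)=\mathbb{E}_{P_{W,S}}\big[\int l(W,z)\,\mu(dz)-\frac1n\sum_{i=1}^n l(W,Z_i)\big]$. $KL$ denotes the Kullback–Leibler divergence with natural logarithm; $P_W\otimes\mu$ is the product measure. *)

theory Defs
  imports "HOL-Probability.Probability"
begin

definition KLdiv :: "'a measure \<Rightarrow> 'a measure \<Rightarrow> ereal" where
  "KLdiv P Q =
     (if absolutely_continuous Q P \<and> integrable P (\<lambda>x. ln (enn2real (RN_deriv Q P x)))
      then ereal (\<integral>x. ln (enn2real (RN_deriv Q P x)) \<partial>P)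
      else \<infinity>)"

definition subgaussian :: "'a measure \<Rightarrow> ('a \<Rightarrow> real) \<Rightarrow> real \<Rightarrow> bool" where
  "subgaussian M X \<sigma> \<longleftrightarrow> integrable M X \<and>
     (\<forall>t::real. integrable M (\<lambda>x. exp (t * (X x - (\<integral>y. X y \<partial>M)))) \<and>
        (\<integral>x. exp (t * (X x - (\<integral>y. X y \<partial>M))) \<partial>M) \<le> exp (t\<^sup>2 * \<sigma>\<^sup>2 / 2))"

abbreviation sample_space :: "nat \<Rightarrow> 'z measure \<Rightarrow> (nat \<Rightarrow> 'z) measure" where
  "sample_space n Z \<equiv> PiM {..<n} (\<lambda>_. Z)"

abbreviation sample_law :: "nat \<Rightarrow> 'z measure \<Rightarrow> (nat \<Rightarrow> 'z) measure" where
  "sample_law n \<mu> \<equiv> PiM {..<n} (\<lambda>_. \<mu>)"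

definition joint_WS :: "nat \<Rightarrow> 'w measure \<Rightarrow> 'z measure \<Rightarrow> 'z measure
    \<Rightarrow> ((nat \<Rightarrow> 'z) \<Rightarrow> 'w measure) \<Rightarrow> ('w \<times> (nat \<Rightarrow> 'z)) measure" where
  "joint_WS n W Z \<mu> K =
     sample_law n \<mu> \<bind> (\<lambda>s. distr (K s) (W \<Otimes>\<^sub>M sample_space n Z) (\<lambda>w. (w, s)))"

definition marg_W :: "nat \<Rightarrow> 'w measure \<Rightarrow> 'z measure \<Rightarrow> 'z measure
    \<Rightarrow> ((nat \<Rightarrow> 'z) \<Rightarrow> 'w measure) \<Rightarrow> 'w measure" where
  "marg_W n W Z \<mu> K = distr (joint_WS n W Z \<mu> K) W fst"

definition joint_WZi :: "nat \<Rightarrow> 'w measure \<Rightarrow> 'z measure \<Rightarrow> 'z measure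
    \<Rightarrow> ((nat \<Rightarrow> 'z) \<Rightarrow> 'w measure) \<Rightarrow> nat \<Rightarrow> ('w \<times> 'z) measure" where
  "joint_WZi n W Z \<mu> K i = distr (joint_WS n W Z \<mu> K) (W \<Otimes>\<^sub>M Z) (\<lambda>(w, s). (w, s i))"

definition exp_gen :: "nat \<Rightarrow> 'w measure \<Rightarrow> 'z measure \<Rightarrow> 'z measure
    \<Rightarrow> ((nat \<Rightarrow> 'z) \<Rightarrow> 'w measure) \<Rightarrow> ('w \<Rightarrow> 'z \<Rightarrow> real) \<Rightarrow> real" where
  "exp_gen n W Z \<mu> K l =
     (\<integral>ws. ((\<integral>z. l (fst ws) z \<partial>\<mu>) - (1 / real n) * (\<Sum>i<n. l (fst ws) (snd ws i)))
        \<partial>(joint_WS n W Z \<mu> K))"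

end

theory Submission
  imports Defs
begin


lemma DV_core:
  fixes P Q :: "'a measure" and f :: "'a \<Rightarrow> real"
  defines "g \<equiv> (\<lambda>x. enn2real (RN_deriv Q P x))"
  defines "c \<equiv> (\<integral>x. exp (f x) \<partial>Q)"
  assumes P: "prob_space P" and Q: "prob_space Q" and sP: "sets P = sets Q"
    and ac: "absolutely_continuous Q P"
    and f[measurable]: "f \<in> borel_measurable Q" and ef: "integrable Q (\<lambda>x. exp (f x))"
  shows "c > 0" and "integrable P (\<lambda>x. exp (f x) / (g x * c))"
    and "(\<integral>x. exp (f x) / (g x * c) \<partial>P) \<le> 1"
    and "AE x in P. f x \<le> ln (g x) + ln c + exp (f x) / (g x * c) - 1"
proof -
  interpret P: prob_space P by fact
  interpret Q: prob_space Q by fact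
  have sfP: "sigma_finite_measure P" by (rule P.sigma_finite_measure_axioms)
  have gm[measurable]: "g \<in> borel_measurable Q" unfolding g_def by measurable
  have gnn: "\<And>x. g x \<ge> 0" unfolding g_def by simp
  show cpos: "c > 0"
  proof -
    have ge: "0 \<le> (\<integral>x. exp (f x) \<partial>Q)" by simp
    have "(\<integral>x. exp (f x) \<partial>Q) \<noteq> 0"
      using integral_nonneg_eq_0_iff_AE[OF ef] Q.AE_False by simp
    with ge have "0 < (\<integral>x. exp (f x) \<partial>Q)" by linarith
    then show ?thesis unfolding c_def .
  qed
  have hm[measurable]: "(\<lambda>x. exp (f x) / (g x * c)) \<in> borel_measurable Q" by measurable
  have eqgh: "\<And>x. g x * (exp (f x) / (g x * c)) = (if g x = 0 then 0 else exp (f x) / c)"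
    by auto
  have int1: "integrable Q (\<lambda>x. exp (f x) / c)" using ef by simp
  have int2: "integrable Q (\<lambda>x. g x * (exp (f x) / (g x * c)))"
    apply (rule Bochner_Integration.integrable_bound[OF int1])
     apply measurable
    done
  show hi: "integrable P (\<lambda>x. exp (f x) / (g x * c))"
    using Q.RN_deriv_integrable[OF sfP ac sP hm] int2 unfolding g_def by simp
  have "(\<integral>x. exp (f x) / (g x * c) \<partial>P) = (\<integral>x. g x * (exp (f x) / (g x * c)) \<partial>Q)"
    using Q.RN_deriv_integral[OF sfP ac sP hm] unfolding g_def by simp
  also have "\<dots> \<le> (\<integral>x. exp (f x) / c \<partial>Q)"
    apply (rule integral_mono[OF int2 int1])
    using cpos gnn by (auto simp: eqgh)
  also have "\<dots> = 1" using cpos unfolding c_def by simp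
  finally show "(\<integral>x. exp (f x) / (g x * c) \<partial>P) \<le> 1" .
  have "AE x in P. RN_deriv Q P x \<noteq> 0"
  proof -
    have "AE x in density Q (RN_deriv Q P). RN_deriv Q P x \<noteq> 0"
      by (subst AE_density) auto
    then show ?thesis using Q.density_RN_deriv[OF ac sP] by metis
  qed
  moreover have "AE x in P. RN_deriv Q P x \<noteq> \<infinity>"
    by (rule absolutely_continuous_AE[OF sP ac Q.RN_deriv_finite[OF sfP ac sP]])
  ultimately have gpos: "AE x in P. g x > 0"
    unfolding g_def by eventually_elim (auto simp: enn2real_positive_iff less_top[symmetric] zero_less_iff_neq_zero)
  show "AE x in P. f x \<le> ln (g x) + ln c + exp (f x) / (g x * c) - 1"
    using gpos
  proof eventually_elim
    case (elim x)
    have pos: "exp (f x) / (g x * c) > 0" using elim cpos by simp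
    have "ln (exp (f x) / (g x * c)) \<le> exp (f x) / (g x * c) - 1"
      by (rule ln_le_minus_one[OF pos])
    moreover have "ln (exp (f x) / (g x * c)) = f x - ln (g x) - ln c"
      using elim cpos by (simp add: ln_div ln_mult)
    ultimately show ?case by simp
  qed
qed

lemma quad_bound:
  fixes a D s :: real
  assumes H: "\<And>t. t * a \<le> D + t\<^sup>2 * s\<^sup>2 / 2"
  shows "D \<ge> 0" and "\<bar>a\<bar> \<le> sqrt (2 * s\<^sup>2 * D)"
proof -
  show D0: "D \<ge> 0" using H[of 0] by simp
  show "\<bar>a\<bar> \<le> sqrt (2 * s\<^sup>2 * D)"
  proof (cases "s = 0")
    case True
    have "a = 0"
    proof (rule ccontr)
      assume "a \<noteq> 0"
      then have "((D + 1) / a) * a = D + 1" by simp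
      with H[of "(D + 1) / a"] True show False by simp
    qed
    then show ?thesis using D0 by simp
  next
    case False
    then have s2: "s\<^sup>2 > 0" by simp
    have "(a / s\<^sup>2) * a \<le> D + (a / s\<^sup>2)\<^sup>2 * s\<^sup>2 / 2" by (rule H)
    moreover have "(a / s\<^sup>2) * a = a\<^sup>2 / s\<^sup>2" by (simp add: power2_eq_square)
    moreover have "(a / s\<^sup>2)\<^sup>2 * s\<^sup>2 / 2 = a\<^sup>2 / s\<^sup>2 / 2"
      using s2 by (simp add: power2_eq_square)
    ultimately have "a\<^sup>2 / s\<^sup>2 \<le> D + a\<^sup>2 / s\<^sup>2 / 2" by linarith
    then have "a\<^sup>2 / s\<^sup>2 \<le> 2 * D" by simp
    then have "a\<^sup>2 \<le> 2 * D * s\<^sup>2" using s2 by (simp add: divide_le_eq)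
    then have "a\<^sup>2 \<le> 2 * s\<^sup>2 * D" by (simp add: algebra_simps)
    then have "sqrt (a\<^sup>2) \<le> sqrt (2 * s\<^sup>2 * D)" by (rule real_sqrt_le_mono)
    then show ?thesis by simp
  qed
qed

lemma subg_KL:
  fixes P Q :: "'a measure" and X :: "'a \<Rightarrow> real"
  defines "D \<equiv> (\<integral>x. ln (enn2real (RN_deriv Q P x)) \<partial>P)"
  assumes P: "prob_space P" and Q: "prob_space Q" and sP: "sets P = sets Q"
    and ac: "absolutely_continuous Q P"
    and lnint: "integrable P (\<lambda>x. ln (enn2real (RN_deriv Q P x)))"
    and X[measurable]: "X \<in> borel_measurable Q" and Xnn: "\<And>x. X x \<ge> 0"
    and sg: "subgaussian Q X \<sigma>"
  shows "integrable P X" "D \<ge> 0" "\<bar>(\<integral>x. X x \<partial>P) - (\<integral>x. X x \<partial>Q)\<bar> \<le> sqrt (2 * \<sigma>\<^sup>2 * D)"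
proof -
  interpret P: prob_space P by fact
  interpret Q: prob_space Q by fact
  define m where "m = (\<integral>x. X x \<partial>Q)"
  define g where "g = (\<lambda>x. enn2real (RN_deriv Q P x))"
  define c where "c = (\<lambda>t. \<integral>x. exp (t * (X x - m)) \<partial>Q)"
  define h where "h = (\<lambda>t x. exp (t * (X x - m)) / (g x * c t))"
  have ei: "\<And>t. integrable Q (\<lambda>x. exp (t * (X x - m)))" and
       cb: "\<And>t. c t \<le> exp (t\<^sup>2 * \<sigma>\<^sup>2 / 2)"
    using sg unfolding subgaussian_def m_def c_def by auto
  have fm: "\<And>t. (\<lambda>x. t * (X x - m)) \<in> borel_measurable Q" by measurable
  note core = DV_core[OF P Q sP ac fm ei]
  have XP[measurable]: "X \<in> borel_measurable P" using X unfolding measurable_cong_sets[OF sP refl] .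
  have RHSi: "\<And>t. integrable P (\<lambda>x. ln (g x) + ln (c t) + h t x - 1)"
    using core(2) lnint unfolding g_def h_def c_def by (intro Bochner_Integration.integrable_add Bochner_Integration.integrable_diff) auto
  show XI: "integrable P X"
  proof (rule Bochner_Integration.integrable_bound[OF Bochner_Integration.integrable_add[OF RHSi[of 1] P.integrable_const[of m]]])
    show "AE x in P. norm (X x) \<le> norm (ln (g x) + ln (c 1) + h 1 x - 1 + m)"
      using core(4)[of 1] unfolding h_def g_def c_def by eventually_elim (use Xnn in auto)
  qed (rule XP)
  have key: "t * ((\<integral>x. X x \<partial>P) - m) \<le> D + t\<^sup>2 * \<sigma>\<^sup>2 / 2" for t
  proof -
    have "t * ((\<integral>x. X x \<partial>P) - m) = (\<integral>x. t * (X x - m) \<partial>P)"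
      using XI by (simp add: algebra_simps P.prob_space)
    also have "\<dots> \<le> (\<integral>x. ln (g x) + ln (c t) + h t x - 1 \<partial>P)"
      apply (rule integral_mono_AE[OF _ RHSi])
      using XI apply simp
      using core(4)[of t] unfolding h_def g_def c_def by simp
    also have "\<dots> = D + ln (c t) + (\<integral>x. h t x \<partial>P) - 1"
      using core(2)[of t] lnint unfolding D_def g_def h_def c_def by (simp add: P.prob_space)
    also have "\<dots> \<le> D + ln (c t)"
      using core(3)[of t] unfolding h_def g_def c_def by simp
    also have "\<dots> \<le> D + t\<^sup>2 * \<sigma>\<^sup>2 / 2"
      using core(1)[of t] cb[of t] unfolding c_def by (smt (verit) ln_exp ln_le_cancel_iff exp_gt_zero)
    finally show ?thesis .
  qed
  show "D \<ge> 0" by (rule quad_bound(1)[OF key])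
  show "\<bar>(\<integral>x. X x \<partial>P) - (\<integral>x. X x \<partial>Q)\<bar> \<le> sqrt (2 * \<sigma>\<^sup>2 * D)"
    using quad_bound(2)[OF key] unfolding m_def .
qed

lemma sqrt_sum_le:
  fixes s x y :: real
  assumes "x \<ge> 0" "y \<ge> 0"
  shows "sqrt (2 * s\<^sup>2 * x) + sqrt (2 * s\<^sup>2 * y) \<le> 2 * sqrt (s\<^sup>2 * (x + y))"
proof -
  define u where "u = s\<^sup>2 * x"
  define v where "v = s\<^sup>2 * y"
  have u: "u \<ge> 0" and v: "v \<ge> 0" using assms by (auto simp: u_def v_def)
  have e1: "2 * s\<^sup>2 * x = 2 * u" and e2: "2 * s\<^sup>2 * y = 2 * v" and e3: "s\<^sup>2 * (x + y) = u + v"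
    by (auto simp: u_def v_def algebra_simps)
  have gm: "sqrt (u * v) \<le> (u + v) / 2" by (rule arith_geo_mean_sqrt[OF u v])
  have "(sqrt (2 * u) + sqrt (2 * v))\<^sup>2 = 2 * u + 2 * v + 2 * (sqrt (2 * u) * sqrt (2 * v))"
    using u v by (simp add: power2_sum)
  also have "sqrt (2 * u) * sqrt (2 * v) = 2 * sqrt (u * v)"
  proof -
    have "sqrt (2 * u) * sqrt (2 * v) = sqrt (4 * (u * v))"
      by (simp add: real_sqrt_mult[symmetric] algebra_simps)
    also have "\<dots> = 2 * sqrt (u * v)" by (simp add: real_sqrt_mult)
    finally show ?thesis .
  qed
  finally have "(sqrt (2 * u) + sqrt (2 * v))\<^sup>2 \<le> (2 * sqrt (u + v))\<^sup>2"
    using gm u v by (simp add: power_mult_distrib)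
  then have "sqrt (2 * u) + sqrt (2 * v) \<le> 2 * sqrt (u + v)"
    by (rule power2_le_imp_le) (use u v in simp)
  then show ?thesis by (simp add: e1 e2 e3)
qed

lemma KL_apply:
  fixes P Q :: "'a measure" and X :: "'a \<Rightarrow> real"
  assumes P: "prob_space P" and Q: "prob_space Q" and sP: "sets P = sets Q"
    and fin: "KLdiv P Q \<noteq> \<infinity>"
    and X: "X \<in> borel_measurable Q" and Xnn: "\<And>x. X x \<ge> 0"
    and sg: "subgaussian Q X \<sigma>"
  shows "integrable P X" "real_of_ereal (KLdiv P Q) \<ge> 0"
    "\<bar>(\<integral>x. X x \<partial>P) - (\<integral>x. X x \<partial>Q)\<bar> \<le> sqrt (2 * \<sigma>\<^sup>2 * real_of_ereal (KLdiv P Q))"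
proof -
  have c: "absolutely_continuous Q P \<and> integrable P (\<lambda>x. ln (enn2real (RN_deriv Q P x)))"
    using fin unfolding KLdiv_def by (auto split: if_splits)
  have eq: "real_of_ereal (KLdiv P Q) = (\<integral>x. ln (enn2real (RN_deriv Q P x)) \<partial>P)"
    using c unfolding KLdiv_def by simp
  note r = subg_KL[OF P Q sP c[THEN conjunct1] c[THEN conjunct2] X Xnn sg]
  show "integrable P X" by (rule r(1))
  show "real_of_ereal (KLdiv P Q) \<ge> 0" using r(2) eq by simp
  show "\<bar>(\<integral>x. X x \<partial>P) - (\<integral>x. X x \<partial>Q)\<bar> \<le> sqrt (2 * \<sigma>\<^sup>2 * real_of_ereal (KLdiv P Q))"
    using r(3) eq by simp
qed



theorem theorem2:
  fixes n :: nat and W :: "'w measure" and Z :: "'z measure" and \<mu> :: "'z measure"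
    and K :: "(nat \<Rightarrow> 'z) \<Rightarrow> 'w measure"
    and l :: "'w \<Rightarrow> 'z \<Rightarrow> real"
    and Phat :: "nat \<Rightarrow> ('w \<times> 'z) measure"
    and \<sigma> :: real
  assumes n_pos: "n \<ge> 1"
    and mu_prob: "prob_space \<mu>" and mu_sets: "sets \<mu> = sets Z"
    and K_meas: "K \<in> sample_space n Z \<rightarrow>\<^sub>M prob_algebra W"
    and l_meas: "(\<lambda>(w, z). l w z) \<in> borel_measurable (W \<Otimes>\<^sub>M Z)"
    and l_nonneg: "\<And>w z. l w z \<ge> 0"
    and Phat_prob: "\<And>i. i < n \<Longrightarrow> prob_space (Phat i)"
    and Phat_sets: "\<And>i. i < n \<Longrightarrow> sets (Phat i) = sets (W \<Otimes>\<^sub>M Z)"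
    and Phat_subg: "\<And>i. i < n \<Longrightarrow> subgaussian (Phat i) (\<lambda>(w, z). l w z) \<sigma>"
  shows "(\<forall>i<n. KLdiv (marg_W n W Z \<mu> K \<Otimes>\<^sub>M \<mu>) (Phat i) \<noteq> \<infinity>
               \<and> KLdiv (joint_WZi n W Z \<mu> K i) (Phat i) \<noteq> \<infinity>) \<longrightarrow>
         \<bar>exp_gen n W Z \<mu> K l\<bar> \<le>
           (2 / real n) * (\<Sum>i<n. sqrt (\<sigma>\<^sup>2 *
              (real_of_ereal (KLdiv (marg_W n W Z \<mu> K \<Otimes>\<^sub>M \<mu>) (Phat i))
               + real_of_ereal (KLdiv (joint_WZi n W Z \<mu> K i) (Phat i)))))"
proof
  assume fin: "\<forall>i<n. KLdiv (marg_W n W Z \<mu> K \<Otimes>\<^sub>M \<mu>) (Phat i) \<noteq> \<infinity>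
               \<and> KLdiv (joint_WZi n W Z \<mu> K i) (Phat i) \<noteq> \<infinity>"
  interpret mu: prob_space \<mu> by fact
  define SS where "SS = sample_space n Z"
  define SL where "SL = sample_law n \<mu>"
  define J where "J = joint_WS n W Z \<mu> K"
  define PW where "PW = marg_W n W Z \<mu> K"
  define PM where "PM = PW \<Otimes>\<^sub>M \<mu>"
  define PWZ where "PWZ = joint_WZi n W Z \<mu> K"
  define L where "L = (\<lambda>(w, z). l w z)"
  define a where "a = (\<lambda>i. real_of_ereal (KLdiv PM (Phat i)))"
  define b where "b = (\<lambda>i. real_of_ereal (KLdiv (PWZ i) (Phat i)))"
  have Lm[measurable]: "L \<in> borel_measurable (W \<Otimes>\<^sub>M Z)" using l_meas unfolding L_def .
  have sSL: "sets SL = sets SS" unfolding SL_def SS_def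
    by (rule sets_PiM_cong) (auto simp: mu_sets)
  have SLp: "prob_space SL" unfolding SL_def by (rule prob_space_PiM) (rule mu_prob)
  have Km: "K \<in> SL \<rightarrow>\<^sub>M prob_algebra W"
    using K_meas unfolding SS_def[symmetric] measurable_cong_sets[OF sSL refl] .
  have swap: "(\<lambda>(s, w). (w, s)) \<in> SL \<Otimes>\<^sub>M W \<rightarrow>\<^sub>M W \<Otimes>\<^sub>M SS"
  proof -
    have "(\<lambda>(s, w). (w, s)) \<in> SS \<Otimes>\<^sub>M W \<rightarrow>\<^sub>M W \<Otimes>\<^sub>M SS" by measurable
    moreover have "sets (SL \<Otimes>\<^sub>M W) = sets (SS \<Otimes>\<^sub>M W)"
      using sSL by (rule sets_pair_measure_cong) simp
    ultimately show ?thesis using measurable_cong_sets by blast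
  qed
  have kern: "(\<lambda>s. distr (K s) (W \<Otimes>\<^sub>M SS) (\<lambda>w. (w, s))) \<in> SL \<rightarrow>\<^sub>M prob_algebra (W \<Otimes>\<^sub>M SS)"
  proof (rule measurable_prob_algebraI)
    show "(\<lambda>s. distr (K s) (W \<Otimes>\<^sub>M SS) (\<lambda>w. (w, s))) \<in> SL \<rightarrow>\<^sub>M subprob_algebra (W \<Otimes>\<^sub>M SS)"
      using measurable_distr2[where f="\<lambda>s w. (w, s)", OF _ measurable_prob_algebraD[OF Km]] swap
      by simp
  next
    fix s assume s: "s \<in> space SL"
    have "K s \<in> space (prob_algebra W)" using Km s by (rule measurable_space)
    then have Ks: "prob_space (K s)" "sets (K s) = sets W" by (auto simp: space_prob_algebra)
    have sS: "s \<in> space SS" using s sets_eq_imp_space_eq[OF sSL] by simp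
    have "(\<lambda>w. (w, s)) \<in> W \<rightarrow>\<^sub>M W \<Otimes>\<^sub>M SS" using sS by measurable
    then have "(\<lambda>w. (w, s)) \<in> K s \<rightarrow>\<^sub>M W \<Otimes>\<^sub>M SS" using measurable_cong_sets[OF Ks(2) refl] by blast
    then show "prob_space (distr (K s) (W \<Otimes>\<^sub>M SS) (\<lambda>w. (w, s)))"
      using Ks(1) prob_space.prob_space_distr by blast
  qed
  have SLsp: "SL \<in> space (prob_algebra SL)" using SLp by (simp add: space_prob_algebra)
  have Jeq: "J = SL \<bind> (\<lambda>s. distr (K s) (W \<Otimes>\<^sub>M SS) (\<lambda>w. (w, s)))"
    unfolding J_def joint_WS_def SL_def SS_def ..
  have Jp: "prob_space J" unfolding Jeq by (rule prob_space_bind'[OF SLsp kern])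
  have sJ: "sets J = sets (W \<Otimes>\<^sub>M SS)" unfolding Jeq by (rule sets_bind'[OF SLsp kern])
  interpret J: prob_space J by (rule Jp)
  have fstm: "fst \<in> J \<rightarrow>\<^sub>M W" unfolding measurable_cong_sets[OF sJ refl] by measurable
  have PWd: "PW = distr J W fst" unfolding PW_def marg_W_def J_def ..
  have PWp: "prob_space PW" unfolding PWd by (rule J.prob_space_distr[OF fstm])
  have sPW: "sets PW = sets W" unfolding PWd by simp
  have PMp: "prob_space PM" unfolding PM_def by (rule prob_space_pair[OF PWp mu_prob])
  have sPM: "sets PM = sets (W \<Otimes>\<^sub>M Z)" unfolding PM_def
    by (rule sets_pair_measure_cong[OF sPW mu_sets])
  have gim: "(\<lambda>(w, s). (w, s i)) \<in> J \<rightarrow>\<^sub>M W \<Otimes>\<^sub>M Z" if "i < n" for i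
    unfolding measurable_cong_sets[OF sJ refl] SS_def
    apply measurable
    using that apply simp
    done
  have PWZd: "PWZ i = distr J (W \<Otimes>\<^sub>M Z) (\<lambda>(w, s). (w, s i))" for i
    unfolding PWZ_def joint_WZi_def J_def ..
  have PWZp: "prob_space (PWZ i)" if "i < n" for i
    unfolding PWZd by (rule J.prob_space_distr[OF gim[OF that]])
  have sPWZ: "sets (PWZ i) = sets (W \<Otimes>\<^sub>M Z)" for i unfolding PWZd by simp
  have LmP: "L \<in> borel_measurable (Phat i)" if "i < n" for i
    using Lm unfolding measurable_cong_sets[OF Phat_sets[OF that] refl] .
  have Lnn: "\<And>x. L x \<ge> 0" unfolding L_def using l_nonneg by auto
  have sg: "subgaussian (Phat i) L \<sigma>" if "i < n" for i using Phat_subg[OF that] unfolding L_def .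
  have fA: "KLdiv PM (Phat i) \<noteq> \<infinity>" and fB: "KLdiv (PWZ i) (Phat i) \<noteq> \<infinity>" if "i < n" for i
    using fin that unfolding PM_def PW_def PWZ_def by auto
  have KA: "integrable PM L" "\<bar>(\<integral>x. L x \<partial>PM) - (\<integral>x. L x \<partial>Phat i)\<bar> \<le> sqrt (2 * \<sigma>\<^sup>2 * a i)" "a i \<ge> 0"
    if i: "i < n" for i
    using KL_apply[OF PMp Phat_prob[OF i] _ fA[OF i] LmP[OF i] Lnn sg[OF i]] sPM Phat_sets[OF i]
    unfolding a_def by auto
  have KB: "integrable (PWZ i) L" "\<bar>(\<integral>x. L x \<partial>PWZ i) - (\<integral>x. L x \<partial>Phat i)\<bar> \<le> sqrt (2 * \<sigma>\<^sup>2 * b i)" "b i \<ge> 0"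
    if i: "i < n" for i
    using KL_apply[OF PWZp[OF i] Phat_prob[OF i] _ fB[OF i] LmP[OF i] Lnn sg[OF i]] sPWZ Phat_sets[OF i]
    unfolding b_def by auto
  have IA: "integrable PM L" using KA(1)[of 0] n_pos by simp
  interpret PW: prob_space PW by (rule PWp)
  interpret pps: pair_sigma_finite PW \<mu>
    unfolding pair_sigma_finite_def using PW.sigma_finite_measure_axioms mu.sigma_finite_measure_axioms by blast
  define f where "f = (\<lambda>w. \<integral>z. l w z \<partial>\<mu>)"
  have fi: "integrable PW f" using pps.integrable_fst'[OF IA[unfolded PM_def]] unfolding f_def L_def by simp
  have fint: "(\<integral>w. f w \<partial>PW) = (\<integral>x. L x \<partial>PM)"
    using pps.integral_fst'[OF IA[unfolded PM_def]] unfolding f_def L_def PM_def by simp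
  have fm: "f \<in> borel_measurable W"
    using borel_measurable_integrable[OF fi] unfolding measurable_cong_sets[OF sPW refl] .
  have Fi: "integrable J (\<lambda>ws. f (fst ws))"
    using fi unfolding PWd integrable_distr_eq[OF fstm fm] .
  have FI: "(\<integral>ws. f (fst ws) \<partial>J) = (\<integral>x. L x \<partial>PM)"
    using fint unfolding PWd integral_distr[OF fstm fm] .
  have Gi: "integrable J (\<lambda>ws. l (fst ws) (snd ws i))" if i: "i < n" for i
    using KB(1)[OF i] unfolding PWZd integrable_distr_eq[OF gim[OF i] Lm]
    by (simp add: L_def split_beta)
  have GI: "(\<integral>ws. l (fst ws) (snd ws i) \<partial>J) = (\<integral>x. L x \<partial>PWZ i)" if i: "i < n" for i
    unfolding PWZd integral_distr[OF gim[OF i] Lm]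
    by (simp add: L_def split_beta)
  define E where "E = (\<integral>x. L x \<partial>PM)"
  define e where "e = (\<lambda>i. \<integral>x. L x \<partial>PWZ i)"
  have "exp_gen n W Z \<mu> K l = (\<integral>ws. f (fst ws) - (1 / real n) * (\<Sum>i<n. l (fst ws) (snd ws i)) \<partial>J)"
    unfolding exp_gen_def J_def f_def ..
  also have "\<dots> = (\<integral>ws. f (fst ws) \<partial>J) - (1 / real n) * (\<Sum>i<n. (\<integral>ws. l (fst ws) (snd ws i) \<partial>J))"
  proof -
    have Si: "integrable J (\<lambda>ws. \<Sum>i<n. l (fst ws) (snd ws i))"
      using Gi by (intro Bochner_Integration.integrable_sum) auto
    have "(\<integral>ws. f (fst ws) - (1 / real n) * (\<Sum>i<n. l (fst ws) (snd ws i)) \<partial>J)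
        = (\<integral>ws. f (fst ws) \<partial>J) - (\<integral>ws. (1 / real n) * (\<Sum>i<n. l (fst ws) (snd ws i)) \<partial>J)"
      using Fi Si by (intro Bochner_Integration.integral_diff) auto
    also have "(\<integral>ws. (1 / real n) * (\<Sum>i<n. l (fst ws) (snd ws i)) \<partial>J)
        = (1 / real n) * (\<integral>ws. (\<Sum>i<n. l (fst ws) (snd ws i)) \<partial>J)"
      by (rule integral_mult_right_zero)
    also have "(\<integral>ws. (\<Sum>i<n. l (fst ws) (snd ws i)) \<partial>J) = (\<Sum>i<n. (\<integral>ws. l (fst ws) (snd ws i) \<partial>J))"
      using Gi by (intro Bochner_Integration.integral_sum) auto
    finally show ?thesis .
  qed
  also have "\<dots> = E - (1 / real n) * (\<Sum>i<n. e i)"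
    using FI GI unfolding E_def e_def by simp
  also have "\<dots> = (1 / real n) * (\<Sum>i<n. E - e i)"
    using n_pos by (simp add: sum_subtractf field_simps)
  finally have eg: "exp_gen n W Z \<mu> K l = (1 / real n) * (\<Sum>i<n. E - e i)" .
  have bnd: "\<bar>E - e i\<bar> \<le> 2 * sqrt (\<sigma>\<^sup>2 * (a i + b i))" if i: "i < n" for i
  proof -
    have "\<bar>E - e i\<bar> \<le> sqrt (2 * \<sigma>\<^sup>2 * a i) + sqrt (2 * \<sigma>\<^sup>2 * b i)"
      using KA(2)[OF i] KB(2)[OF i] unfolding E_def e_def by linarith
    also have "\<dots> \<le> 2 * sqrt (\<sigma>\<^sup>2 * (a i + b i))"
      by (rule sqrt_sum_le[OF KA(3)[OF i] KB(3)[OF i]])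
    finally show ?thesis .
  qed
  have "\<bar>exp_gen n W Z \<mu> K l\<bar> \<le> (1 / real n) * (\<Sum>i<n. \<bar>E - e i\<bar>)"
    unfolding eg using n_pos by (simp add: abs_mult sum_abs divide_right_mono)
  also have "\<dots> \<le> (1 / real n) * (\<Sum>i<n. 2 * sqrt (\<sigma>\<^sup>2 * (a i + b i)))"
    using bnd by (intro mult_left_mono sum_mono) auto
  also have "\<dots> = (2 / real n) * (\<Sum>i<n. sqrt (\<sigma>\<^sup>2 * (a i + b i)))"
    by (simp add: sum_distrib_left[symmetric])
  finally show "\<bar>exp_gen n W Z \<mu> K l\<bar> \<le> (2 / real n) * (\<Sum>i<n. sqrt (\<sigma>\<^sup>2 *
              (real_of_ereal (KLdiv (marg_W n W Z \<mu> K \<Otimes>\<^sub>M \<mu>) (Phat i))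
               + real_of_ereal (KLdiv (joint_WZi n W Z \<mu> K i) (Phat i)))))"
    unfolding a_def b_def PM_def PW_def PWZ_def .
qed

end
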